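(* Let $G=(V,E)$ be a finite directed acyclic graph, $G'=(V,E')$ its minimum equivalent graph, $S$ a set of streams, and $f:V\to S$ a stream assignment satisfying maximum logical concurrency on $G$. Then $\mathrm{min}_{sync}(G,f)=\mathrm{min}_{sync}(G',f)$.
   Context: A path from $u$ to $v$ in a directed graph is a nonempty sequence of edges $(u,w_1),\dots,(w_k,v)$ of that graph. The minimum equivalent graph (MEG) of a finite DAG $G=(V,E)$ is the subgraph $G'=(V,E')$, $E'\subseteq E$, with the same vertex set and the smallest number of edges among subgraphs having the same reachability relation as $G$. A stream assignment is any function $f:V\to S$. It satisfies maximum logical concurrency on a graph $H$ with vertex set $V$ if for all distinct $u,v$ with no path between them in either direction in $H$, $f(u)\neq f(v)$. For a directed graph $H=(V,E_H)$, a synchronization plan $\Lambda\subseteq E_H$ is safe for $f$ on $H$ if for every edge $(u,v)\in E_H$, either $f(u)=f(v)$ or there is a path $P\subseteq E_H$ from $u$ to $v$ with $P\cap\Lambda\neq\emptyset$. Define $\mathrm{min}_{sync}(H,f)=\min\{|\Lambda| : \Lambda\subseteq E_H \text{ is safe for } f \text{ on } H\}$. *)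

theory Defs
  imports Main
begin

definition is_path :: "('a \<times> 'a) set \<Rightarrow> 'a \<Rightarrow> 'a \<Rightarrow> ('a \<times> 'a) list \<Rightarrow> bool" where
  "is_path E u v P \<longleftrightarrow> P \<noteq> [] \<and> set P \<subseteq> E \<and> fst (hd P) = u \<and> snd (last P) = v \<and>
     (\<forall>i. Suc i < length P \<longrightarrow> snd (P ! i) = fst (P ! Suc i))"

definition reach :: "('a \<times> 'a) set \<Rightarrow> 'a \<Rightarrow> 'a \<Rightarrow> bool" where
  "reach E u v \<longleftrightarrow> (\<exists>P. is_path E u v P)"

definition finite_dag :: "'a set \<Rightarrow> ('a \<times> 'a) set \<Rightarrow> bool" where
  "finite_dag V E \<longleftrightarrow> finite V \<and> E \<subseteq> V \<times> V \<and> acyclic E"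

definition is_MEG :: "('a \<times> 'a) set \<Rightarrow> ('a \<times> 'a) set \<Rightarrow> bool" where
  "is_MEG E E' \<longleftrightarrow> E' \<subseteq> E \<and> reach E' = reach E \<and>
     (\<forall>E''. E'' \<subseteq> E \<and> reach E'' = reach E \<longrightarrow> card E' \<le> card E'')"

definition max_logical_concurrency :: "'a set \<Rightarrow> ('a \<times> 'a) set \<Rightarrow> ('a \<Rightarrow> 's) \<Rightarrow> bool" where
  "max_logical_concurrency V E f \<longleftrightarrow>
     (\<forall>u\<in>V. \<forall>v\<in>V. u \<noteq> v \<and> \<not> reach E u v \<and> \<not> reach E v u \<longrightarrow> f u \<noteq> f v)"

definition safe_sync :: "('a \<times> 'a) set \<Rightarrow> ('a \<Rightarrow> 's) \<Rightarrow> ('a \<times> 'a) set \<Rightarrow> bool" where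
  "safe_sync E f L \<longleftrightarrow> L \<subseteq> E \<and>
     (\<forall>(u, v)\<in>E. f u = f v \<or> (\<exists>P. is_path E u v P \<and> set P \<inter> L \<noteq> {}))"

definition min_sync :: "('a \<times> 'a) set \<Rightarrow> ('a \<Rightarrow> 's) \<Rightarrow> nat" where
  "min_sync E f = Min {card L | L. safe_sync E f L}"

end

theory Submission
  imports Defs
begin

lemma is_path_Cons:
  "is_path E u v (e#Q) \<longleftrightarrow> e \<in> E \<and> fst e = u \<and>
     (if Q = [] then snd e = v else is_path E (snd e) v Q)"
proof (cases Q)
  case Nil
  then show ?thesis by (auto simp: is_path_def)
next
  case (Cons q Q')
  have A: "(\<forall>i. Suc i < length (e#Q) \<longrightarrow> snd ((e#Q) ! i) = fst ((e#Q) ! Suc i)) \<longleftrightarrow>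
        snd e = fst q \<and> (\<forall>i. Suc i < length Q \<longrightarrow> snd (Q ! i) = fst (Q ! Suc i))"
  proof
    assume H: "\<forall>i. Suc i < length (e#Q) \<longrightarrow> snd ((e#Q) ! i) = fst ((e#Q) ! Suc i)"
    show "snd e = fst q \<and> (\<forall>i. Suc i < length Q \<longrightarrow> snd (Q ! i) = fst (Q ! Suc i))"
    proof
      show "snd e = fst q" using H[rule_format, of 0] Cons by simp
      show "\<forall>i. Suc i < length Q \<longrightarrow> snd (Q ! i) = fst (Q ! Suc i)"
        using H Cons by (metis Suc_less_eq length_Cons nth_Cons_Suc)
    qed
  next
    assume H: "snd e = fst q \<and> (\<forall>i. Suc i < length Q \<longrightarrow> snd (Q ! i) = fst (Q ! Suc i))"
    show "\<forall>i. Suc i < length (e#Q) \<longrightarrow> snd ((e#Q) ! i) = fst ((e#Q) ! Suc i)"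
    proof (intro allI impI)
      fix i assume "Suc i < length (e#Q)"
      then show "snd ((e#Q) ! i) = fst ((e#Q) ! Suc i)" using H Cons
        by (cases i) auto
    qed
  qed
  show ?thesis using Cons A by (auto simp: is_path_def)
qed

lemma path_trancl: "is_path E u v P \<Longrightarrow> (u,v) \<in> E\<^sup>+"
proof (induction P arbitrary: u)
  case Nil
  then show ?case by (simp add: is_path_def)
next
  case (Cons e Q)
  then show ?case
    apply (cases e)
    apply (auto simp: is_path_Cons split: if_splits)
    by (meson trancl_into_trancl2)
qed

lemma trancl_path: "(u,v) \<in> E\<^sup>+ \<Longrightarrow> \<exists>P. is_path E u v P"
proof (induction rule: converse_trancl_induct)
  case (base y)
  then have "is_path E y v [(y,v)]" by (simp add: is_path_Cons)
  then show ?case by blast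
next
  case (step x y)
  then obtain Q where "is_path E y v Q" by blast
  moreover have "Q \<noteq> []" using calculation by (simp add: is_path_def)
  ultimately have "is_path E x v ((x,y)#Q)" using step
    by (simp add: is_path_Cons)
  then show ?case by blast
qed

lemma reach_trancl: "reach E = (\<lambda>u v. (u,v) \<in> E\<^sup>+)"
  unfolding reach_def by (auto intro!: ext dest: path_trancl trancl_path)

lemma remove_edge:
  "(x,y) \<in> R\<^sup>+ \<Longrightarrow> (x,y) \<in> (R - {(a,b)})\<^sup>+ \<or> ((x,a) \<in> R\<^sup>* \<and> (b,y) \<in> R\<^sup>*)"
proof (induction rule: trancl_induct)
  case (base y)
  then show ?case by (cases "(x,y) = (a,b)") auto
next
  case (step y z)
  show ?case
  proof (cases "(y,z) = (a,b)")
    case True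
    then show ?thesis using step by (auto dest: trancl_into_rtrancl)
  next
    case False
    then show ?thesis using step
      by (meson Diff_iff rtrancl.rtrancl_into_rtrancl singletonD trancl.trancl_into_trancl)
  qed
qed

lemma key:
  assumes ac: "acyclic E" and fin: "finite E" and sub: "E' \<subseteq> E"
    and eq: "E'\<^sup>+ = E\<^sup>+"
    and minim: "\<And>E''. E'' \<subseteq> E \<Longrightarrow> E''\<^sup>+ = E\<^sup>+ \<Longrightarrow> card E' \<le> card E''"
    and uv: "(u,v) \<in> E'" and uw: "(u,w) \<in> E\<^sup>+" and wv: "(w,v) \<in> E\<^sup>+"
  shows False
proof -
  define E'' where "E'' = E' - {(u,v)}"
  have "(u,w) \<in> E'\<^sup>+" using uw eq by simp
  from remove_edge[OF this, of u v] have 1: "(u,w) \<in> E''\<^sup>+"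
  proof
    assume "(u, u) \<in> E'\<^sup>* \<and> (v, w) \<in> E'\<^sup>*"
    then have "(v,w) \<in> E\<^sup>*" using eq by (metis trancl_rtrancl_absorb)
    with wv have "(v,v) \<in> E\<^sup>+" by auto
    with ac show "(u,w) \<in> E''\<^sup>+" by (auto simp: acyclic_def)
  qed (simp add: E''_def)
  have "(w,v) \<in> E'\<^sup>+" using wv eq by simp
  from remove_edge[OF this, of u v] have 2: "(w,v) \<in> E''\<^sup>+"
  proof
    assume "(w, u) \<in> E'\<^sup>* \<and> (v, v) \<in> E'\<^sup>*"
    then have "(w,u) \<in> E\<^sup>*" using eq by (metis trancl_rtrancl_absorb)
    with uw have "(u,u) \<in> E\<^sup>+" by auto
    with ac show "(w,v) \<in> E''\<^sup>+" by (auto simp: acyclic_def)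
  qed (simp add: E''_def)
  have uvE: "(u,v) \<in> E''\<^sup>+" using 1 2 by (rule trancl_trans)
  have "E' \<subseteq> E''\<^sup>+"
  proof
    fix x assume "x \<in> E'"
    show "x \<in> E''\<^sup>+"
    proof (cases "x = (u,v)")
      case True then show ?thesis using uvE by simp
    next
      case False then have "x \<in> E''" using \<open>x \<in> E'\<close> E''_def by simp
      then show ?thesis by (rule r_into_trancl')
    qed
  qed
  then have "E'\<^sup>+ \<subseteq> (E''\<^sup>+)\<^sup>+" by (rule trancl_mono_subset)
  then have "E'\<^sup>+ \<subseteq> E''\<^sup>+" by simp
  moreover have "E''\<^sup>+ \<subseteq> E'\<^sup>+" unfolding E''_def by (rule trancl_mono_subset) auto
  ultimately have "E''\<^sup>+ = E\<^sup>+" using eq by auto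
  moreover have "E'' \<subseteq> E" using sub E''_def by auto
  ultimately have "card E' \<le> card E''" using minim by blast
  moreover have "finite E'" using fin sub finite_subset by blast
  then have "card E'' < card E'" unfolding E''_def using uv
    by (rule card_Diff1_less)
  ultimately show False by simp
qed

lemma path_mono: "is_path E' u v P \<Longrightarrow> E' \<subseteq> E \<Longrightarrow> is_path E u v P"
  by (auto simp: is_path_def)

lemma cross_path:
  assumes "(u,v) \<in> E'\<^sup>+" and HC: "\<And>a b. (a,b) \<in> E' \<Longrightarrow> f a \<noteq> f b \<Longrightarrow> (a,b) \<in> C"
  shows "f u \<noteq> f v \<Longrightarrow> \<exists>P. is_path E' u v P \<and> set P \<inter> C \<noteq> {}"
  using assms(1)
proof (induction rule: converse_trancl_induct)
  case (base y)
  then have "is_path E' y v [(y,v)]" by (simp add: is_path_Cons)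
  moreover have "(y,v) \<in> C" using base HC by simp
  ultimately have "is_path E' y v [(y,v)] \<and> set [(y,v)] \<inter> C \<noteq> {}" by auto
  then show ?case by (rule exI)
next
  case (step x y)
  note xy = step.hyps(1) and yv = step.hyps(2) and fx = step.prems
  obtain Q where Q: "is_path E' y v Q" using trancl_path[OF yv] by blast
  then have Qn: "Q \<noteq> []" by (simp add: is_path_def)
  show ?case
  proof (cases "f x = f y")
    case True
    then have "f y \<noteq> f v" using fx by simp
    then obtain Q' where Q': "is_path E' y v Q'" "set Q' \<inter> C \<noteq> {}"
      using step.IH by blast
    have "Q' \<noteq> []" using Q'(1) by (simp add: is_path_def)
    then have "is_path E' x v ((x,y)#Q')" using Q'(1) xy by (simp add: is_path_Cons)
    moreover have "set ((x,y)#Q') \<inter> C \<noteq> {}"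
      using Q'(2) by auto
    ultimately have "is_path E' x v ((x,y)#Q') \<and> set ((x,y)#Q') \<inter> C \<noteq> {}" by simp
    then show ?thesis by (rule exI)
  next
    case False
    have "is_path E' x v ((x,y)#Q)" using Q Qn xy by (simp add: is_path_Cons)
    moreover have "(x,y) \<in> C" using False xy HC by simp
    ultimately have "is_path E' x v ((x,y)#Q) \<and> set ((x,y)#Q) \<inter> C \<noteq> {}" by auto
    then show ?thesis by (rule exI)
  qed
qed

lemma min_eq:
  assumes "finite X" "safe_sync X f C" "\<And>L. safe_sync X f L \<Longrightarrow> C \<subseteq> L"
  shows "min_sync X f = card C"
  unfolding min_sync_def
proof (rule Min_eqI)
  have "{card L |L. safe_sync X f L} \<subseteq> card ` Pow X" by (auto simp: safe_sync_def)
  then show "finite {card L |L. safe_sync X f L}" using assms(1) finite_subset by blast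
  show "card C \<in> {card L |L. safe_sync X f L}" using assms(2) by blast
  fix y assume "y \<in> {card L |L. safe_sync X f L}"
  then obtain L where "y = card L" "safe_sync X f L" by blast
  then show "card C \<le> y" using assms
    by (metis card_mono finite_subset safe_sync_def)
qed

theorem mainTheorem4:
  fixes V :: "'a set" and E E' :: "('a \<times> 'a) set" and S :: "'s set" and f :: "'a \<Rightarrow> 's"
  assumes "finite_dag V E"
    and "is_MEG E E'"
    and "f ` V \<subseteq> S"
    and "max_logical_concurrency V E f"
  shows "min_sync E f = min_sync E' f"
proof -
  have finE: "finite E" and ac: "acyclic E" using assms(1) unfolding finite_dag_def
    by (auto intro: finite_subset)
  have sub: "E' \<subseteq> E" and r: "reach E' = reach E"
    and mn: "\<And>E''. E'' \<subseteq> E \<Longrightarrow> reach E'' = reach E \<Longrightarrow> card E' \<le> card E''"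
    using assms(2) unfolding is_MEG_def by auto
  have eq: "E'\<^sup>+ = E\<^sup>+"
  proof -
    have "\<And>u v. (u,v) \<in> E'\<^sup>+ \<longleftrightarrow> (u,v) \<in> E\<^sup>+" using r unfolding reach_trancl by metis
    then show ?thesis by auto
  qed
  have minim: "\<And>E''. E'' \<subseteq> E \<Longrightarrow> E''\<^sup>+ = E\<^sup>+ \<Longrightarrow> card E' \<le> card E''"
    using mn unfolding reach_trancl by simp
  have only: "P = [(u,v)]" if uv: "(u,v) \<in> E'" and P: "is_path E u v P" for u v P
  proof (cases P)
    case Nil then show ?thesis using P by (simp add: is_path_def)
  next
    case (Cons e Q)
    show ?thesis
    proof (cases "Q = []")
      case True then show ?thesis using P Cons by (cases e) (simp add: is_path_Cons)
    next
      case False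
      then have "e \<in> E" "fst e = u" "is_path E (snd e) v Q" using P Cons by (auto simp: is_path_Cons)
      then have "(u, snd e) \<in> E\<^sup>+" "(snd e, v) \<in> E\<^sup>+"
        by (auto dest: path_trancl)
      then show ?thesis using key[OF ac finE sub eq minim uv] by blast
    qed
  qed
  define C where "C = {(a,b). (a,b) \<in> E' \<and> f a \<noteq> f b}"
  have finE': "finite E'" using finE sub finite_subset by blast
  have safeE: "safe_sync E f C"
    unfolding safe_sync_def
  proof (intro conjI ballI)
    show "C \<subseteq> E" using sub C_def by auto
    fix x assume "x \<in> E"
    then obtain u v where x: "x = (u,v)" "(u,v) \<in> E" by (cases x) auto
    show "case x of (u, v) \<Rightarrow> f u = f v \<or> (\<exists>P. is_path E u v P \<and> set P \<inter> C \<noteq> {})"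
    proof (cases "f u = f v")
      case False
      have uvp: "(u,v) \<in> E'\<^sup>+" using x eq by auto
      have HC: "\<And>a b. (a,b) \<in> E' \<Longrightarrow> f a \<noteq> f b \<Longrightarrow> (a,b) \<in> C" unfolding C_def by simp
      from cross_path[OF uvp HC False] obtain P where "is_path E' u v P" "set P \<inter> C \<noteq> {}"
        by blast
      then have "is_path E u v P" "set P \<inter> C \<noteq> {}" using path_mono[OF _ sub] by auto
      then show ?thesis using x by auto
    qed (simp add: x)
  qed
  have safeE': "safe_sync E' f C"
    unfolding safe_sync_def
  proof (intro conjI ballI)
    show "C \<subseteq> E'" using C_def by auto
    fix x assume "x \<in> E'"
    then obtain u v where x: "x = (u,v)" "(u,v) \<in> E'" by (cases x) auto
    have "is_path E' u v [(u,v)]" using x by (simp add: is_path_Cons)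
    then show "case x of (u, v) \<Rightarrow> f u = f v \<or> (\<exists>P. is_path E' u v P \<and> set P \<inter> C \<noteq> {})"
      using x C_def by auto
  qed
  have allE: "C \<subseteq> L" if "safe_sync E f L" for L
  proof
    fix x assume "x \<in> C"
    then obtain u v where x: "x = (u,v)" "(u,v) \<in> E'" "f u \<noteq> f v" unfolding C_def by auto
    have "(u,v) \<in> E" using x sub by auto
    then have "f u = f v \<or> (\<exists>P. is_path E u v P \<and> set P \<inter> L \<noteq> {})"
      using that unfolding safe_sync_def by fast
    then obtain P where "is_path E u v P" "set P \<inter> L \<noteq> {}" using x by blast
    then have "P = [(u,v)]" "set P \<inter> L \<noteq> {}" using only x by auto
    then show "x \<in> L" using x by auto
  qed
  have allE': "C \<subseteq> L" if "safe_sync E' f L" for L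
  proof
    fix x assume "x \<in> C"
    then obtain u v where x: "x = (u,v)" "(u,v) \<in> E'" "f u \<noteq> f v" unfolding C_def by auto
    have "f u = f v \<or> (\<exists>P. is_path E' u v P \<and> set P \<inter> L \<noteq> {})"
      using that x unfolding safe_sync_def by fast
    then obtain P where "is_path E' u v P" "set P \<inter> L \<noteq> {}" using x by blast
    then have "P = [(u,v)]" "set P \<inter> L \<noteq> {}" using only x path_mono[OF _ sub] by auto
    then show "x \<in> L" using x by auto
  qed
  have m1: "min_sync E f = card C" by (rule min_eq[OF finE safeE allE])
  have m2: "min_sync E' f = card C" by (rule min_eq[OF finE' safeE' allE'])
  show ?thesis unfolding m1 m2 ..
qed

end
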